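(* Let $n\ge1$ and let $A_n(1)$ be the $n\times(2n-1)$ matrix $\big[\binom{n+k-1-i}{k-i}\big]_{1\le i\le n,\,1\le k\le 2n-1}$ (with $\binom{m}{j}=0$ for $j<0$). For a strictly increasing map $\sigma:\{1,\ldots,n\}\to\{1,\ldots,2n-1\}$, let $\mathrm A_\sigma(1)$ be the $n\times n$ minor of $A_n(1)$ formed by the columns $\sigma_1<\cdots<\sigma_n$, and let $\tilde\sigma$ be the strictly increasing map $\tilde\sigma_i=2n-\sigma_{n+1-i}$. Then $\mathrm A_\sigma(1)=\mathrm A_{\tilde\sigma}(1)>0$. *)

theory Defs
  imports "Jordan_Normal_Form.Determinant"
begin

definition A1_entry :: "nat \<Rightarrow> nat \<Rightarrow> nat \<Rightarrow> int" where
  "A1_entry n i k = (if i \<le> k then int ((n + k - 1 - i) choose (k - i)) else 0)"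

text \<open>The n x n minor of A_n(1) formed by the columns sigma 1 < ... < sigma n
  (sigma is 1-based; the JNF matrix is 0-based).\<close>
definition A_minor :: "nat \<Rightarrow> (nat \<Rightarrow> nat) \<Rightarrow> int" where
  "A_minor n \<sigma> = det (mat n n (\<lambda>(r, c). A1_entry n (r + 1) (\<sigma> (c + 1))))"

definition sigma_tilde :: "nat \<Rightarrow> (nat \<Rightarrow> nat) \<Rightarrow> nat \<Rightarrow> nat" where
  "sigma_tilde n \<sigma> i = 2 * n - \<sigma> (n + 1 - i)"

end

theory Submission imports Defs "Jordan_Normal_Form.Determinant" "HOL-Computational_Algebra.Polynomial" begin

lemma vandermonde:
  fixes x :: "nat \<Rightarrow> 'a::comm_ring_1"
  shows "det (mat n n (\<lambda>(i,j). x j ^ i)) = (\<Prod>j<n. \<Prod>i<j. x j - x i)"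
proof (induction n arbitrary: x)
  case 0 show ?case by (simp add: det_def)
next
  case (Suc n)
  let ?V = "mat (Suc n) (Suc n) (\<lambda>(i,j). x j ^ i)"
  define L where "L = mat (Suc n) (Suc n) (\<lambda>(i,k). if k = i then 1 else if Suc k = i then - x 0 else (0::'a))"
  define W where "W = mat (Suc n) (Suc n) (\<lambda>(i,j). if i = 0 then 1 else x j ^ (i-1) * (x j - x 0))"
  have detL: "det L = 1"
    by (subst det_lower_triangular[of "Suc n"]) (auto simp: L_def prod_list_diag_prod)
  have WLV: "W = L * ?V"
  proof (rule eq_matI)
    fix i j assume i: "i < dim_row (L * ?V)" and j: "j < dim_col (L*?V)"
    then have i: "i < Suc n" and j: "j<Suc n" by (auto simp: L_def)
    have "(L * ?V) $$ (i,j) = (\<Sum>k\<in>{0..<Suc n}. L $$ (i,k) * x j ^ k)"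
      using i j by (simp add: scalar_prod_def L_def)
    also have "\<dots> = (\<Sum>k\<in>{0..<Suc n}. (if k = i then x j ^ k else 0) + (if Suc k = i then - x 0 * x j ^ k else 0))"
      by (rule sum.cong) (auto simp: L_def i)
    also have "\<dots> = (if i = 0 then 1 else x j ^ i - x 0 * x j ^ (i-1))"
      using i by (cases i) (auto simp: sum.distrib)
    also have "\<dots> = W $$ (i,j)" using i j by (cases i) (auto simp: W_def algebra_simps)
    finally show "W $$ (i,j) = (L*?V) $$ (i,j)" by simp
  qed (auto simp: W_def L_def)
  have "det ?V = det W" using det_mult[of L "Suc n" ?V] detL WLV by (simp add: L_def)
  also have "det W = (\<Sum>i<Suc n. W $$ (i,0) * cofactor W i 0)"
    by (rule laplace_expansion_column) (auto simp: W_def)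
  also have "\<dots> = W $$ (0,0) * cofactor W 0 0"
    by (subst sum.lessThan_Suc_shift) (simp add: W_def)
  also have "\<dots> = det (mat_delete W 0 0)" by (simp add: W_def cofactor_def)
  also have "mat_delete W 0 0 = mat n n (\<lambda>(i,j). x (Suc j)^i) * 
      mat n n (\<lambda>(i,j). if i = j then x (Suc j) - x 0 else 0)"
  proof (rule eq_matI)
    fix i j assume i: "i < dim_row (mat n n (\<lambda>(i,j). x (Suc j)^i) * 
      mat n n (\<lambda>(i,j). if i = j then x (Suc j) - x 0 else (0::'a)))" and j: "j < dim_col (mat n n (\<lambda>(i,j). x (Suc j)^i) * 
      mat n n (\<lambda>(i,j). if i = j then x (Suc j) - x 0 else (0::'a)))"
    then have i: "i < n" and j: "j < n" by auto
    have "(\<Sum>k\<in>{0..<n}. x (Suc k) ^ i * (if k = j then x (Suc j) - x 0 else 0)) = x (Suc j) ^ i * (x (Suc j) - x 0)"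
      using j by (simp add: if_distrib cong: if_cong)
    then show "mat_delete W 0 0 $$ (i, j) = (mat n n (\<lambda>(i,j). x (Suc j)^i) * 
      mat n n (\<lambda>(i,j). if i = j then x (Suc j) - x 0 else 0)) $$ (i, j)"
      using i j by (simp add: mat_delete_def W_def scalar_prod_def)
  qed (auto simp: W_def mat_delete_def)
  also have "det \<dots> = det (mat n n (\<lambda>(i,j). x (Suc j)^i)) * det (mat n n (\<lambda>(i,j). if i = j then x (Suc j) - x 0 else 0))"
    by (rule det_mult) auto
  also have "det (mat n n (\<lambda>(i,j). if i = j then x (Suc j) - x 0 else 0)) = (\<Prod>j<n. x (Suc j) - x 0)"
    by (subst det_upper_triangular[of _ n]) (auto simp: prod_list_diag_prod atLeast0LessThan)
  also have "det (mat n n (\<lambda>(i,j). x (Suc j)^i)) = (\<Prod>j<n. \<Prod>i<j. x (Suc j) - x (Suc i))"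
    using Suc.IH[of "\<lambda>k. x (Suc k)"] by simp
  also have "(\<Prod>j<n. \<Prod>i<j. x (Suc j) - x (Suc i)) * (\<Prod>j<n. x (Suc j) - x 0) = (\<Prod>j<Suc n. \<Prod>i<j. x j - x i)"
  proof -
    have "(\<Prod>j<Suc n. \<Prod>i<j. x j - x i) = (\<Prod>j<n. \<Prod>i<Suc j. x (Suc j) - x i)"
      by (subst prod.lessThan_Suc_shift) simp
    also have "\<dots> = (\<Prod>j<n. (x (Suc j) - x 0) * (\<Prod>i<j. x (Suc j) - x (Suc i)))"
      by (rule prod.cong[OF refl], rule prod.lessThan_Suc_shift)
    finally show ?thesis by (simp add: prod.distrib mult.commute)
  qed
  finally show ?case .
qed

lemma prod_pairs_reflect:
  fixes f :: "nat \<Rightarrow> nat \<Rightarrow> 'a::comm_monoid_mult"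
  shows "(\<Prod>j<n. \<Prod>i<j. f i j) = (\<Prod>j<n. \<Prod>i<j. f (n-1-j) (n-1-i))"
proof -
  have "(\<Prod>j<n. \<Prod>i<j. f i j) = (\<Prod>(j,i)\<in>Sigma {..<n} (\<lambda>j. {..<j}). f i j)"
    by (rule prod.Sigma) auto
  also have "\<dots> = (\<Prod>(j,i)\<in>Sigma {..<n} (\<lambda>j. {..<j}). f (n-1-j) (n-1-i))"
    by (rule prod.reindex_bij_witness[where i="\<lambda>(j,i). (n-1-i, n-1-j)" and j="\<lambda>(j,i). (n-1-i, n-1-j)"]) auto
  also have "\<dots> = (\<Prod>j<n. \<Prod>i<j. f (n-1-j) (n-1-i))"
    by (rule prod.Sigma[symmetric]) auto
  finally show ?thesis .
qed

definition F :: "nat \<Rightarrow> rat \<Rightarrow> rat" where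
  "F n z = pochhammer z (n-1) / fact (n-1)"

lemma entry_F:
  assumes "r < n" "1 \<le> k"
  shows "rat_of_int (A1_entry n (Suc r) k) = F n (of_nat k - of_nat r)"
proof (cases "Suc r \<le> k")
  case True
  define m where "m = k - Suc r"
  have k: "k = m + Suc r" using True m_def by simp
  have e: "A1_entry n (Suc r) k = int ((m + (n-1)) choose (n-1))"
  proof -
    have 1: "m \<le> m + n - Suc 0" using assms by simp
    have 2: "m + n - Suc 0 - m = n - Suc 0" using assms by simp
    have "(m + n - Suc 0) choose m = (m + n - Suc 0) choose (n - Suc 0)"
      using binomial_symmetric[OF 1] 2 by simp
    then show ?thesis unfolding A1_entry_def using True assms by (simp add: k algebra_simps)
  qed
  have z: "(of_nat k - of_nat r :: rat) = of_nat (m + (n-1)) - of_nat (n-1) + 1"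
    using assms by (simp add: k)
  show ?thesis unfolding e F_def z
    by (simp add: binomial_gbinomial gbinomial_pochhammer' del: of_nat_add)
next
  case False
  have "pochhammer (of_nat k - of_nat r :: rat) (n-1) = 0"
    unfolding pochhammer_eq_0_iff using False assms
    by (intro exI[of _ "r - k"]) (auto simp: of_nat_diff)
  then show ?thesis using False unfolding A1_entry_def F_def by simp
qed

lemma F_poly:
  assumes "1 \<le> n"
  shows "\<exists>C. \<forall>r<n. \<forall>y. F n (y - of_nat r) = (\<Sum>d<n. C r d * y^d)"
proof -
  define Q :: "nat \<Rightarrow> rat poly" where "Q r = smult (1/fact(n-1)) (\<Prod>i<n-1. [:of_nat i - of_nat r, 1:])" for r
  have deg: "degree (Q r) < n" for r
  proof -
    have "degree (Q r) \<le> degree (\<Prod>i<n-1. [:of_nat i - of_nat r, 1:] :: rat poly)"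
      unfolding Q_def by (rule degree_smult_le)
    also have "\<dots> \<le> (\<Sum>i<n-1. degree ([:of_nat i - of_nat r, 1:] :: rat poly))"
      using degree_prod_sum_le[of "{..<n-1}" "\<lambda>i. [:of_nat i - of_nat r, 1:] :: rat poly"] by (simp add: o_def)
    also have "\<dots> = n - 1" by simp
    finally show ?thesis using assms by simp
  qed
  have ev: "poly (Q r) y = F n (y - of_nat r)" for r y
    unfolding Q_def F_def poly_smult poly_prod pochhammer_prod atLeast0LessThan
    by (simp add: algebra_simps)
  have "poly (Q r) y = (\<Sum>d<n. coeff (Q r) d * y^d)" for r y
  proof -
    have "poly (Q r) y = (\<Sum>d\<le>degree (Q r). coeff (Q r) d * y^d)" by (rule poly_altdef)
    also have "\<dots> = (\<Sum>d<n. coeff (Q r) d * y^d)"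
      by (rule sum.mono_neutral_left) (use deg[of r] in \<open>auto simp: coeff_eq_0\<close>)
    finally show ?thesis .
  qed
  then show ?thesis using ev by (intro exI[of _ "\<lambda>r d. coeff (Q r) d"]) auto
qed

lemma det_F:
  assumes "1 \<le> n"
  shows "\<exists>K. \<forall>y. det (mat n n (\<lambda>(r,c). F n (y c - of_nat r))) = K * (\<Prod>j<n. \<Prod>i<j. y j - y i)"
proof -
  obtain C where C: "\<And>r y. r < n \<Longrightarrow> F n (y - of_nat r) = (\<Sum>d<n. C r d * y^d)"
    using F_poly[OF assms] by blast
  have "det (mat n n (\<lambda>(r,c). F n (y c - of_nat r))) = det (mat n n (\<lambda>(r,d). C r d)) * (\<Prod>j<n. \<Prod>i<j. y j - y i)" for y
  proof -
    have "mat n n (\<lambda>(r,c). F n (y c - of_nat r)) = mat n n (\<lambda>(r,d). C r d) * mat n n (\<lambda>(d,c). y c ^ d)"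
      by (rule eq_matI) (auto simp: scalar_prod_def C atLeast0LessThan)
    then show ?thesis using det_mult[of "mat n n (\<lambda>(r,d). C r d)" n "mat n n (\<lambda>(d,c). y c ^ d)"]
      vandermonde[of n y] by simp
  qed
  then show ?thesis by blast
qed

lemma A_minor_id: "A_minor n (\<lambda>i. i) = 1"
  unfolding A_minor_def
  by (subst det_upper_triangular[of _ n]) (auto simp: prod_list_diag_prod A1_entry_def upper_triangular_def)

lemma pi_pos:
  fixes g :: "nat \<Rightarrow> rat"
  assumes "\<And>i j. i < j \<Longrightarrow> j < n \<Longrightarrow> g i < g j"
  shows "(\<Prod>j<n. \<Prod>i<j. g j - g i) > 0"
  using assms by (intro prod_pos) auto

theorem proposition5:
  fixes n :: nat and \<sigma> :: "nat \<Rightarrow> nat"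
  assumes "n \<ge> 1"
    and "strict_mono_on {1..n} \<sigma>"
    and "\<sigma> ` {1..n} \<subseteq> {1..2 * n - 1}"
  shows "A_minor n \<sigma> = A_minor n (sigma_tilde n \<sigma>) \<and> A_minor n \<sigma> > 0"
proof -
  obtain K where K: "\<And>y. det (mat n n (\<lambda>(r,c). F n (y c - of_nat r))) = K * (\<Prod>j<n. \<Prod>i<j. y j - y i)"
    using det_F[OF assms(1)] by blast
  have key: "rat_of_int (A_minor n \<tau>) = K * (\<Prod>j<n. \<Prod>i<j. of_nat (\<tau> (Suc j)) - of_nat (\<tau> (Suc i)))"
    if t: "\<And>c. c < n \<Longrightarrow> 1 \<le> \<tau> (Suc c)" for \<tau>
  proof -
    have "rat_of_int (A_minor n \<tau>) = det (map_mat rat_of_int (mat n n (\<lambda>(r, c). A1_entry n (r + 1) (\<tau> (c + 1)))))"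
      unfolding A_minor_def by simp
    also have "map_mat rat_of_int (mat n n (\<lambda>(r, c). A1_entry n (r + 1) (\<tau> (c + 1)))) 
       = mat n n (\<lambda>(r,c). F n (of_nat (\<tau> (Suc c)) - of_nat r))"
      by (rule eq_matI) (auto simp: entry_F[OF _ t])
    finally show ?thesis using K by simp
  qed
  have e1: "rat_of_int (A_minor n (\<lambda>i. i)) = K * (\<Prod>j<n. \<Prod>i<j. of_nat (Suc j) - of_nat (Suc i))"
    using key[of "\<lambda>i. i"] by simp
  have p1: "(\<Prod>j<n. \<Prod>i<j. of_nat (Suc j) - of_nat (Suc i) :: rat) > 0"
    by (rule pi_pos) simp
  have Kpos: "K > 0"
  proof -
    have "K * (\<Prod>j<n. \<Prod>i<j. of_nat (Suc j) - of_nat (Suc i) :: rat) = 1"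
      using e1 unfolding A_minor_id by simp
    moreover have "\<not> K > 0 \<Longrightarrow> K * (\<Prod>j<n. \<Prod>i<j. of_nat (Suc j) - of_nat (Suc i) :: rat) \<le> 0"
      using p1 by (intro mult_nonpos_nonneg) auto
    ultimately show ?thesis by force
  qed
  have sr: "\<sigma> (Suc c) \<in> {1..2*n-1}" if "c < n" for c
    using assms(3) that by (simp add: image_subset_iff)
  have s1: "1 \<le> \<sigma> (Suc c)" and s2: "\<sigma> (Suc c) \<le> 2 * n - 1" if "c < n" for c
    using sr[OF that] by auto
  have mono: "\<sigma> (Suc i) < \<sigma> (Suc j)" if "i < j" "j < n" for i j
    using assms(2) that unfolding strict_mono_on_def by auto
  have st: "sigma_tilde n \<sigma> (Suc c) = 2 * n - \<sigma> (n - c)" for c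
    unfolding sigma_tilde_def by simp
  have t1: "1 \<le> sigma_tilde n \<sigma> (Suc c)" if "c < n" for c
  proof -
    have "n - c = Suc (n - 1 - c)" using that by simp
    then show ?thesis using s2[of "n - 1 - c"] that assms(1) unfolding st by simp
  qed
  define g where "g i = (of_nat (\<sigma> (Suc i)) :: rat)" for i
  have Pt: "(\<Prod>j<n. \<Prod>i<j. of_nat (sigma_tilde n \<sigma> (Suc j)) - of_nat (sigma_tilde n \<sigma> (Suc i)))
     = (\<Prod>j<n. \<Prod>i<j. g (n-1-i) - g (n-1-j) :: rat)"
  proof (rule prod.cong[OF refl], rule prod.cong[OF refl])
    fix j i assume j: "j \<in> {..<n}" and i: "i \<in> {..<j}"
    have ej: "n - j = Suc (n - 1 - j)" and ei: "n - i = Suc (n-1-i)" using i j by auto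
    have a: "\<sigma> (n - j) \<le> 2 * n" using s2[of "n-1-j"] ej j by auto
    have b: "\<sigma> (n - i) \<le> 2 * n" using s2[of "n-1-i"] ei i j by auto
    show "of_nat (sigma_tilde n \<sigma> (Suc j)) - of_nat (sigma_tilde n \<sigma> (Suc i)) = g (n-1-i) - g (n-1-j)"
      unfolding st g_def using a b ei ej by (simp add: of_nat_diff)
  qed
  have P: "(\<Prod>j<n. \<Prod>i<j. g (n-1-i) - g (n-1-j)) = (\<Prod>j<n. \<Prod>i<j. g j - g i)"
    using prod_pairs_reflect[of "\<lambda>i j. g j - g i" n] by simp
  have Ppos: "(\<Prod>j<n. \<Prod>i<j. g j - g i) > 0"
    by (rule pi_pos) (simp add: g_def mono)
  have ea: "rat_of_int (A_minor n \<sigma>) = K * (\<Prod>j<n. \<Prod>i<j. g j - g i)"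
    using key[of \<sigma>] s1 unfolding g_def by simp
  have eb: "rat_of_int (A_minor n (sigma_tilde n \<sigma>)) = K * (\<Prod>j<n. \<Prod>i<j. g j - g i)"
    using key[of "sigma_tilde n \<sigma>"] t1 Pt P by simp
  have "rat_of_int (A_minor n \<sigma>) > 0" unfolding ea using Kpos Ppos by simp
  then have "A_minor n \<sigma> > 0" by simp
  moreover have "A_minor n \<sigma> = A_minor n (sigma_tilde n \<sigma>)"
    using ea eb of_int_eq_iff by metis
  ultimately show ?thesis by simp
qed

end
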